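(* Let $D$ be a $3$-dicritical digraph that is not a bidirected odd cycle. Then the bidirected part $B(D)$ is a forest.
   Context: Digraphs are finite, with no loops and no parallel arcs; a digon is a pair of arcs $uv,vu$. A $2$-dicolouring of $D$ is a map $V(D)\to\{1,2\}$ such that each colour class induces an acyclic subdigraph. $D$ is $3$-dicritical if $D$ has no $2$-dicolouring but every proper subdigraph has one. The bidirected part $B(D)$ is the undirected graph on $V(D)$ in which $u,v$ are adjacent iff $D$ contains both arcs $uv$ and $vu$. A bidirected odd cycle is the digraph obtained from an odd (undirected) cycle by replacing every edge with a digon. *)

theory Defs
  imports Main
begin

definition digraph :: "'a set \<Rightarrow> ('a \<times> 'a) set \<Rightarrow> bool" where
  "digraph V A \<longleftrightarrow> finite V \<and> A \<subseteq> V \<times> V \<and> (\<forall>v. (v, v) \<notin> A)"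

definition subdigraph :: "'a set \<Rightarrow> ('a \<times> 'a) set \<Rightarrow> 'a set \<Rightarrow> ('a \<times> 'a) set \<Rightarrow> bool" where
  "subdigraph V' A' V A \<longleftrightarrow> V' \<subseteq> V \<and> A' \<subseteq> A \<and> A' \<subseteq> V' \<times> V'"

definition two_dicolouring :: "'a set \<Rightarrow> ('a \<times> 'a) set \<Rightarrow> ('a \<Rightarrow> nat) \<Rightarrow> bool" where
  "two_dicolouring V A c \<longleftrightarrow> (\<forall>v\<in>V. c v \<in> {1, 2}) \<and>
     (\<forall>i\<in>{1::nat, 2}. acyclic (A \<inter> ({v\<in>V. c v = i} \<times> {v\<in>V. c v = i})))"

definition two_dicolourable :: "'a set \<Rightarrow> ('a \<times> 'a) set \<Rightarrow> bool" where
  "two_dicolourable V A \<longleftrightarrow> (\<exists>c. two_dicolouring V A c)"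

definition three_dicritical :: "'a set \<Rightarrow> ('a \<times> 'a) set \<Rightarrow> bool" where
  "three_dicritical V A \<longleftrightarrow> \<not> two_dicolourable V A \<and>
     (\<forall>V' A'. subdigraph V' A' V A \<and> (V', A') \<noteq> (V, A) \<longrightarrow> two_dicolourable V' A')"

definition bidirected_adj :: "('a \<times> 'a) set \<Rightarrow> 'a \<Rightarrow> 'a \<Rightarrow> bool" where
  "bidirected_adj A u v \<longleftrightarrow> (u, v) \<in> A \<and> (v, u) \<in> A"

definition is_forest :: "'a set \<Rightarrow> ('a \<Rightarrow> 'a \<Rightarrow> bool) \<Rightarrow> bool" where
  "is_forest V E \<longleftrightarrow> \<not> (\<exists>vs. length vs \<ge> 3 \<and> distinct vs \<and> set vs \<subseteq> V \<and>
      (\<forall>i < length vs. E (vs ! i) (vs ! ((i + 1) mod length vs))))"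

definition bidirected_odd_cycle :: "'a set \<Rightarrow> ('a \<times> 'a) set \<Rightarrow> bool" where
  "bidirected_odd_cycle V A \<longleftrightarrow> (\<exists>vs. length vs \<ge> 3 \<and> odd (length vs) \<and> distinct vs \<and>
      V = set vs \<and>
      A = (\<Union>i<length vs. {(vs ! i, vs ! ((i + 1) mod length vs)),
                            (vs ! ((i + 1) mod length vs), vs ! i)}))"

end

theory Submission
  imports Defs
begin

lemma mono_digon:
  assumes "two_dicolouring V A c" "x \<in> V" "y \<in> V" "(x,y) \<in> A" "(y,x) \<in> A"
  shows "c x \<noteq> c y"
proof
  assume eq: "c x = c y"
  have ci: "c x \<in> {1,2}" using assms unfolding two_dicolouring_def by blast
  let ?C = "{v\<in>V. c v = c x}"
  have ac: "acyclic (A \<inter> (?C \<times> ?C))" using assms(1) ci unfolding two_dicolouring_def by blast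
  have "(x,y) \<in> A \<inter> (?C \<times> ?C)" "(y,x) \<in> A \<inter> (?C \<times> ?C)" using assms eq by auto
  hence "(x,x) \<in> (A \<inter> (?C \<times> ?C))\<^sup>+" by (meson trancl.r_into_trancl trancl_into_trancl)
  thus False using ac unfolding acyclic_def by blast
qed

lemma alt:
  fixes c :: "'b \<Rightarrow> nat"
  assumes "\<forall>i<m. c (f i) \<noteq> c (f (Suc i))" "\<forall>i\<le>m. c (f i) \<in> {1,2}"
  shows "c (f m) = c (f 0) \<longleftrightarrow> even m"
  using assms
proof (induction m)
  case 0
  then show ?case by simp
next
  case (Suc m)
  have IH: "c (f m) = c (f 0) \<longleftrightarrow> even m" using Suc by auto
  have "c (f m) \<in> {1,2}" "c (f (Suc m)) \<in> {1,2}" "c (f 0) \<in> {1,2}" using Suc.prems(2) by auto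
  moreover have "c (f m) \<noteq> c (f (Suc m))" using Suc.prems(1) by auto
  ultimately show ?case using IH by auto
qed

theorem proposition28:
  fixes V :: "'a set" and A :: "('a \<times> 'a) set"
  assumes "digraph V A"
    and "three_dicritical V A"
    and "\<not> bidirected_odd_cycle V A"
  shows "is_forest V (bidirected_adj A)"
proof (rule ccontr)
  assume "\<not> is_forest V (bidirected_adj A)"
  then obtain vs where len: "length vs \<ge> 3" and dist: "distinct vs" and sub: "set vs \<subseteq> V"
    and adj: "\<forall>i < length vs. bidirected_adj A (vs ! i) (vs ! ((i + 1) mod length vs))"
    unfolding is_forest_def by blast
  define n where "n = length vs"
  have n3: "n \<ge> 3" using len n_def by simp
  have modlt: "\<And>k. k mod length vs < length vs" using len by (intro mod_less_divisor) linarith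
  have inV: "\<And>i. i < n \<Longrightarrow> vs ! i \<in> V" using sub n_def by auto
  have ndcrit: "\<not> two_dicolourable V A" and crit: "\<And>V' A'. subdigraph V' A' V A \<Longrightarrow> (V', A') \<noteq> (V, A) \<Longrightarrow> two_dicolourable V' A'"
    using assms(2) unfolding three_dicritical_def by blast+
  show False
  proof (cases "even n")
    case True
    define a where "a = (vs ! 0, vs ! 1)"
    have aA: "a \<in> A"
    proof -
      have "bidirected_adj A (vs ! 0) (vs ! ((0 + 1) mod n))" using adj[rule_format, of 0] n3 unfolding n_def by (cases vs) auto
      moreover have "(0 + 1) mod n = (1::nat)" using n3 by auto
      ultimately show ?thesis unfolding a_def bidirected_adj_def by simp
    qed
    have "subdigraph V (A - {a}) V A" using assms(1) unfolding subdigraph_def digraph_def by auto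
    moreover have "(V, A - {a}) \<noteq> (V, A)" using aA by auto
    ultimately obtain c where c: "two_dicolouring V (A - {a}) c"
      using crit unfolding two_dicolourable_def by blast
    have cv: "\<forall>v\<in>V. c v \<in> {1,2}" using c unfolding two_dicolouring_def by blast
    have step: "c (vs ! j) \<noteq> c (vs ! ((j+1) mod n))" if "1 \<le> j" "j < n" for j
    proof (rule mono_digon[OF c])
      show "vs ! j \<in> V" using inV that by auto
      show "vs ! ((j+1) mod n) \<in> V" using inV n3 by auto
      have j1: "(j+1) mod n < n" using n3 by auto
      have ne1: "(vs ! j, vs ! ((j+1) mod n)) \<noteq> a"
      proof
        assume "(vs ! j, vs ! ((j+1) mod n)) = a"
        hence "vs ! j = vs ! 0" unfolding a_def by auto
        hence "j = 0" using dist that n_def n3 nth_eq_iff_index_eq by fastforce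
        thus False using that by simp
      qed
      have ne2: "(vs ! ((j+1) mod n), vs ! j) \<noteq> a"
      proof
        assume "(vs ! ((j+1) mod n), vs ! j) = a"
        hence e: "vs ! ((j+1) mod n) = vs ! 0" "vs ! j = vs ! 1" unfolding a_def by auto
        hence "j = 1" using dist that n_def n3 nth_eq_iff_index_eq by fastforce
        moreover have "(j+1) mod n = 0" using e(1) dist j1 n_def n3 nth_eq_iff_index_eq by fastforce
        ultimately show False using n3 by simp
      qed
      show "(vs ! j, vs ! ((j+1) mod n)) \<in> A - {a}" "(vs ! ((j+1) mod n), vs ! j) \<in> A - {a}"
        using adj that n_def ne1 ne2 unfolding bidirected_adj_def by auto
    qed
    define f where "f i = vs ! ((i+1) mod n)" for i
    have "c (f (n-1)) = c (f 0) \<longleftrightarrow> even (n-1)"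
    proof (rule alt)
      show "\<forall>i<n-1. c (f i) \<noteq> c (f (Suc i))"
      proof (intro allI impI)
        fix i assume i: "i < n - 1"
        have "(i+1) mod n = i+1" "(Suc i + 1) mod n = ((i+1)+1) mod n" using i by auto
        thus "c (f i) \<noteq> c (f (Suc i))" using step[of "i+1"] i unfolding f_def by auto
      qed
      show "\<forall>i\<le>n-1. c (f i) \<in> {1,2}" using cv inV n3 unfolding f_def by auto
    qed
    moreover have "f (n-1) = vs ! 0" "f 0 = vs ! 1" using n3 unfolding f_def by auto
    ultimately have neq: "c (vs ! 0) \<noteq> c (vs ! 1)" using True n3 by auto
    have "two_dicolouring V A c"
      unfolding two_dicolouring_def
    proof (intro conjI ballI)
      fix v assume "v \<in> V" thus "c v \<in> {1,2}" using cv by auto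
    next
      fix i :: nat assume i: "i \<in> {1,2}"
      let ?C = "{v\<in>V. c v = i}"
      have "A \<inter> (?C \<times> ?C) = (A - {a}) \<inter> (?C \<times> ?C)" using neq unfolding a_def by auto
      thus "acyclic (A \<inter> (?C \<times> ?C))" using c i unfolding two_dicolouring_def by auto
    qed
    thus False using ndcrit unfolding two_dicolourable_def by blast
  next
    case False
    define A' where "A' = (\<Union>i<length vs. {(vs ! i, vs ! ((i + 1) mod length vs)),
                            (vs ! ((i + 1) mod length vs), vs ! i)})"
    have s: "subdigraph (set vs) A' V A"
      unfolding subdigraph_def A'_def using sub adj n3 n_def unfolding bidirected_adj_def by (auto intro!: nth_mem simp: modlt)
    show False
    proof (cases "(set vs, A') = (V, A)")
      case True
      hence "bidirected_odd_cycle V A" unfolding bidirected_odd_cycle_def A'_def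
        using len dist False n_def by blast
      thus False using assms(3) by simp
    next
      case ne: False
      then obtain c where c: "two_dicolouring (set vs) A' c"
        using crit[OF s] unfolding two_dicolourable_def by blast
      have cv: "\<forall>v\<in>set vs. c v \<in> {1,2}" using c unfolding two_dicolouring_def by blast
      have step: "c (vs ! j) \<noteq> c (vs ! ((j+1) mod n))" if "j < n" for j
        by (rule mono_digon[OF c]) (use that n3 n_def in \<open>auto simp: A'_def modlt intro!: nth_mem\<close>)
      have "c (vs ! (n-1)) = c (vs ! 0) \<longleftrightarrow> even (n-1)"
      proof (rule alt[where f = "\<lambda>i. vs ! i"])
        show "\<forall>i<n-1. c (vs ! i) \<noteq> c (vs ! (Suc i))"
        proof (intro allI impI)
          fix i assume i: "i < n - 1"
          have "(i+1) mod n = Suc i" using i by auto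
          thus "c (vs ! i) \<noteq> c (vs ! (Suc i))" using step[of i] i by auto
        qed
        show "\<forall>i\<le>n-1. c (vs ! i) \<in> {1,2}" using cv n3 n_def by auto
      qed
      moreover have "((n-1)+1) mod n = 0" using n3 by auto
      ultimately show False using step[of "n-1"] False n3 by auto
    qed
  qed
qed

end
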